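(* Let $f\colon 2^{\mathcal{N}}\to\mathbb{R}$ be non-negative and submodular, let $k$ be a positive integer, let $\varepsilon>0$, and let $S,O\subseteq\mathcal{N}$ with $|S|=|O|=k$. Assume $\mathcal{N}\setminus S$ contains at least $k$ elements $d$ with $f(d\mid S)\ge 0$. Suppose that for every integer $0\le t\le k$, \[ \max_{T\subseteq\mathcal{N}\setminus S,\ |T|=t}\ \sum_{u\in T} f(u\mid S)\ \le\ \min_{T\subseteq S,\ |T|=t}\ \sum_{v\in T} f(v\mid S-v)\ +\ \varepsilon f(S). \] Then \[ f(S)\ \ge\ \frac{f(S\cup O)+f(S\cap O)}{2+\varepsilon}\qquad\text{and}\qquad f(S)\ \ge\ \frac{f(S\cap O)}{1+\varepsilon}. \]
   Context: Notation: $f(u\mid A)=f(A\cup\{u\})-f(A)$; $S-v=S\setminus\{v\}$. Submodularity: $f(A\cup\{s\})-f(A)\ge f(B\cup\{s\})-f(B)$ for all $A\subseteq B\subseteq\mathcal{N}$, $s\notin B$. *)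

theory Defs
  imports Complex_Main
begin

definition marg :: "('a set \<Rightarrow> real) \<Rightarrow> 'a \<Rightarrow> 'a set \<Rightarrow> real" where
  "marg f u A = f (A \<union> {u}) - f A"

definition submodular_on :: "'a set \<Rightarrow> ('a set \<Rightarrow> real) \<Rightarrow> bool" where
  "submodular_on N f \<longleftrightarrow>
     (\<forall>A B s. A \<subseteq> B \<and> B \<subseteq> N \<and> s \<in> N \<and> s \<notin> B \<longrightarrow>
        f (A \<union> {s}) - f A \<ge> f (B \<union> {s}) - f B)"

definition nonneg_on :: "'a set \<Rightarrow> ('a set \<Rightarrow> real) \<Rightarrow> bool" where
  "nonneg_on N f \<longleftrightarrow> (\<forall>A. A \<subseteq> N \<longrightarrow> f A \<ge> 0)"

end

theory Submission
  imports Defs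
begin

lemma L1:
  assumes sub: "submodular_on N f" and SN: "S \<subseteq> N"
  shows "finite T \<Longrightarrow> T \<subseteq> N - S \<Longrightarrow> f (S \<union> T) - f S \<le> (\<Sum>u\<in>T. marg f u S)"
proof (induction T rule: finite_induct)
  case empty then show ?case by simp
next
  case (insert x T)
  have "f (S \<union> T \<union> {x}) - f (S \<union> T) \<le> f (S \<union> {x}) - f S"
  proof -
    have "x \<in> N" "x \<notin> S \<union> T" "S \<union> T \<subseteq> N" using insert.prems insert.hyps SN by auto
    then show ?thesis using sub unfolding submodular_on_def by (meson Un_upper1)
  qed
  moreover have "S \<union> insert x T = S \<union> T \<union> {x}" by auto
  ultimately show ?case using insert by (simp add: marg_def)
qed

lemma L2:
  assumes sub: "submodular_on N f" and SN: "S \<subseteq> N"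
  shows "finite R \<Longrightarrow> R \<subseteq> S \<Longrightarrow> (\<Sum>v\<in>R. marg f v (S - {v})) \<le> f S - f (S - R)"
proof (induction R rule: finite_induct)
  case empty then show ?case by simp
next
  case (insert x R)
  have xs: "x \<in> S - R" using insert by auto
  have "f (S - {x} \<union> {x}) - f (S - {x}) \<le> f (S - R - {x} \<union> {x}) - f (S - R - {x})"
  proof -
    have "x \<in> N" "x \<notin> S - {x}" "S - {x} \<subseteq> N" "S - R - {x} \<subseteq> S - {x}" using xs SN by auto
    then show ?thesis using sub unfolding submodular_on_def by meson
  qed
  moreover have "S - R - {x} \<union> {x} = S - R" using xs by auto
  moreover have "S - insert x R = S - R - {x}" by auto
  ultimately show ?case using insert by (simp add: marg_def)
qed

theorem mainTheorem3:
  fixes N :: "'a set" and f :: "'a set \<Rightarrow> real" and k :: nat and \<epsilon> :: real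
    and S Opt :: "'a set"
  assumes "finite N"
    and "nonneg_on N f" and "submodular_on N f"
    and "k > 0" and "\<epsilon> > 0"
    and "S \<subseteq> N" and "Opt \<subseteq> N" and "card S = k" and "card Opt = k"
    and "card {d \<in> N - S. marg f d S \<ge> 0} \<ge> k"
    and "\<forall>t::nat. t \<le> k \<longrightarrow>
           Max ((\<lambda>T. \<Sum>u\<in>T. marg f u S) ` {T. T \<subseteq> N - S \<and> card T = t})
           \<le> Min ((\<lambda>T. \<Sum>v\<in>T. marg f v (S - {v})) ` {T. T \<subseteq> S \<and> card T = t}) + \<epsilon> * f S"
  shows "f S \<ge> (f (S \<union> Opt) + f (S \<inter> Opt)) / (2 + \<epsilon>)
         \<and> f S \<ge> f (S \<inter> Opt) / (1 + \<epsilon>)"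
proof -
  note fN = assms(1)
  have fS: "finite S" and fO: "finite Opt" using fN assms(6,7) finite_subset by auto
  define a where "a = card (Opt - S)"
  have ca: "card (S - Opt) = a"
  proof -
    have "card Opt = card (Opt \<inter> S) + card (Opt - S)"
      using fO by (metis card_Int_Diff inf_commute)
    moreover have "card S = card (S \<inter> Opt) + card (S - Opt)"
      using fS by (metis card_Int_Diff)
    ultimately show ?thesis using assms(8,9) a_def by (simp add: inf_commute)
  qed
  have ak: "a \<le> k" using a_def assms(9) fO by (metis card_mono Diff_subset)
  define M where "M = Max ((\<lambda>T. \<Sum>u\<in>T. marg f u S) ` {T. T \<subseteq> N - S \<and> card T = a})"
  define m where "m = Min ((\<lambda>T. \<Sum>v\<in>T. marg f v (S - {v})) ` {T. T \<subseteq> S \<and> card T = a})"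
  have hyp: "M \<le> m + \<epsilon> * f S" using assms(11) ak M_def m_def by blast
  have fin1: "finite {T. T \<subseteq> N - S \<and> card T = a}"
    by (rule finite_subset[of _ "Pow N"]) (use fN in auto)
  have fin2: "finite {T. T \<subseteq> S \<and> card T = a}"
    by (rule finite_subset[of _ "Pow S"]) (use fS in auto)
  have M1: "(\<Sum>u\<in>Opt - S. marg f u S) \<le> M"
    unfolding M_def using fin1 a_def assms(7) by (intro Max_ge) auto
  obtain D where D: "D \<subseteq> {d \<in> N - S. marg f d S \<ge> 0}" "card D = a"
    using obtain_subset_with_card_n[of a "{d \<in> N - S. marg f d S \<ge> 0}"] ak assms(10) by auto
  have "0 \<le> (\<Sum>u\<in>D. marg f u S)" using D by (intro sum_nonneg) auto
  also have "\<dots> \<le> M" unfolding M_def using fin1 D by (intro Max_ge) auto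
  finally have M0: "0 \<le> M" .
  have m1: "m \<le> (\<Sum>v\<in>S - Opt. marg f v (S - {v}))"
    unfolding m_def using fin2 ca by (intro Min_le) auto
  have A: "f (S \<union> (Opt - S)) - f S \<le> (\<Sum>u\<in>Opt - S. marg f u S)"
    using L1[OF assms(3,6), of "Opt - S"] fO assms(7) by auto
  have B: "(\<Sum>v\<in>S - Opt. marg f v (S - {v})) \<le> f S - f (S - (S - Opt))"
    using L2[OF assms(3,6), of "S - Opt"] fS by auto
  have e1: "S \<union> (Opt - S) = S \<union> Opt" by auto
  have e2: "S - (S - Opt) = S \<inter> Opt" by auto
  have nn: "f (S \<union> Opt) \<ge> 0" using assms(2,6,7) unfolding nonneg_on_def by auto
  have i1: "f (S \<union> Opt) + f (S \<inter> Opt) \<le> (2 + \<epsilon>) * f S"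
    using A B e1 e2 M1 m1 hyp by (simp add: algebra_simps)
  have i2: "f (S \<inter> Opt) \<le> (1 + \<epsilon>) * f S"
    using B e2 M0 m1 hyp by (simp add: algebra_simps)
  show ?thesis using i1 i2 assms(5)
    by (simp add: divide_le_eq mult.commute)
qed

end
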